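(* Let $f\in\mathcal{F}_3$ and $\mathbf{x}\in[0,1]^3$. If $f(1,2)+f(1,3)+f(2,3)\ge1+f(1)+f(2)+f(3)$, there exists an optimal solution $\theta$ of the linear program defining $f^{++}(\mathbf{x})$ with $\theta(\{1,2,3\})\le x_1x_2x_3$ (hence $\theta$ is negatively cylinder dependent: $\sum_{S\supseteq T}\theta(S)\le\prod_{i\in T}x_i$ for all nonempty $T\subseteq[3]$). Otherwise, there exists an optimal solution $\theta$ with $\theta(\{1,2,3\})\ge x_1x_2x_3$ (positively cylinder dependent: $\sum_{S\supseteq T}\theta(S)\ge\prod_{i\in T}x_i$ for all nonempty $T\subseteq[3]$).
   Context: $[n]=\{1,\dots,n\}$. A set function $f:2^{[n]}\to\mathbb{R}_+$ is monotone if $f(S)\le f(T)$ for $S\subseteq T$, submodular if $f(S)+f(T)\ge f(S\cap T)+f(S\cup T)$. $\mathcal{F}_n$ is the set of monotone submodular $f:2^{[n]}\to\mathbb{R}_+$ with $f(\emptyset)=0$, $f([n])=1$. Write $f(i)=f(\{i\})$, $f(i,j)=f(\{i,j\})$. For $\mathbf{x}\in[0,1]^n$, $f^{++}(\mathbf{x})$ is the optimal value of the linear program: maximize $\sum_{S\subseteq[n]}\theta(S)f(S)$ over $\theta:2^{[n]}\to\mathbb{R}_{\ge0}$ with $\sum_S\theta(S)=1$, $\sum_{S\ni i}\theta(S)=x_i$ for all $i$, and $\sum_{S\ni i,j}\theta(S)=x_ix_j$ for all $i<j$. *)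

theory Defs
  imports "HOL-Analysis.Analysis"
begin

text \<open>Ground set [n] = {1..n}; set functions are functions on nat set, considered on Pow {1..n}.\<close>

definition in_F :: "nat \<Rightarrow> (nat set \<Rightarrow> real) \<Rightarrow> bool" where
  "in_F n f \<longleftrightarrow>
     (\<forall>S \<subseteq> {1..n}. f S \<ge> 0) \<and>
     (\<forall>S T. S \<subseteq> T \<and> T \<subseteq> {1..n} \<longrightarrow> f S \<le> f T) \<and>
     (\<forall>S T. S \<subseteq> {1..n} \<and> T \<subseteq> {1..n} \<longrightarrow> f S + f T \<ge> f (S \<inter> T) + f (S \<union> T)) \<and>
     f {} = 0 \<and> f {1..n} = 1"

definition lp_feasible :: "nat \<Rightarrow> (nat \<Rightarrow> real) \<Rightarrow> (nat set \<Rightarrow> real) \<Rightarrow> bool" where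
  "lp_feasible n x \<theta> \<longleftrightarrow>
     (\<forall>S \<subseteq> {1..n}. \<theta> S \<ge> 0) \<and>
     (\<Sum>S\<in>Pow {1..n}. \<theta> S) = 1 \<and>
     (\<forall>i\<in>{1..n}. (\<Sum>S\<in>{S\<in>Pow {1..n}. i \<in> S}. \<theta> S) = x i) \<and>
     (\<forall>i\<in>{1..n}. \<forall>j\<in>{1..n}. i < j \<longrightarrow>
        (\<Sum>S\<in>{S\<in>Pow {1..n}. i \<in> S \<and> j \<in> S}. \<theta> S) = x i * x j)"

definition lp_value :: "nat \<Rightarrow> (nat set \<Rightarrow> real) \<Rightarrow> (nat set \<Rightarrow> real) \<Rightarrow> real" where
  "lp_value n f \<theta> = (\<Sum>S\<in>Pow {1..n}. \<theta> S * f S)"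

definition lp_optimal :: "nat \<Rightarrow> (nat set \<Rightarrow> real) \<Rightarrow> (nat \<Rightarrow> real) \<Rightarrow> (nat set \<Rightarrow> real) \<Rightarrow> bool" where
  "lp_optimal n f x \<theta> \<longleftrightarrow> lp_feasible n x \<theta> \<and>
     (\<forall>\<theta>'. lp_feasible n x \<theta>' \<longrightarrow> lp_value n f \<theta>' \<le> lp_value n f \<theta>)"

definition neg_cylinder_dep :: "nat \<Rightarrow> (nat \<Rightarrow> real) \<Rightarrow> (nat set \<Rightarrow> real) \<Rightarrow> bool" where
  "neg_cylinder_dep n x \<theta> \<longleftrightarrow> (\<forall>T \<subseteq> {1..n}. T \<noteq> {} \<longrightarrow>
     (\<Sum>S\<in>{S\<in>Pow {1..n}. T \<subseteq> S}. \<theta> S) \<le> (\<Prod>i\<in>T. x i))"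

definition pos_cylinder_dep :: "nat \<Rightarrow> (nat \<Rightarrow> real) \<Rightarrow> (nat set \<Rightarrow> real) \<Rightarrow> bool" where
  "pos_cylinder_dep n x \<theta> \<longleftrightarrow> (\<forall>T \<subseteq> {1..n}. T \<noteq> {} \<longrightarrow>
     (\<Sum>S\<in>{S\<in>Pow {1..n}. T \<subseteq> S}. \<theta> S) \<ge> (\<Prod>i\<in>T. x i))"

end

theory Submission
  imports Defs
begin
lemma ivl3: "{1..3::nat} = {1,2,3}" by auto
lemma powlem: "Pow {1..3::nat} = {{},{1},{2},{3},{1,2},{1,3},{2,3},{1,2,3}}"
  unfolding ivl3 by (auto simp: Pow_insert insert_commute)
lemma nI: "(a::nat) \<in> B \<Longrightarrow> a \<notin> A \<Longrightarrow> A \<noteq> B" by blast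
lemma dd: "{1,2} \<noteq> ({1,3}::nat set)" "{1,2} \<noteq> ({2,3}::nat set)" "{1,2} \<noteq> ({1,2,3}::nat set)"
    "{1,3} \<noteq> ({2,3}::nat set)" "{1,3} \<noteq> ({1,2,3}::nat set)" "{2,3} \<noteq> ({1,2,3}::nat set)"
    apply (rule nI[of 3], simp, simp) apply (rule nI[of 3], simp, simp) apply (rule nI[of 3], simp, simp)
    apply (rule nI[of 2], simp, simp) apply (rule nI[of 2], simp, simp) by (rule nI[of 1], simp, simp)
lemma sumPow: "(\<Sum>S\<in>Pow {1..3::nat}. g S) = g {} + g {1} + g {2} + g {3} + g {1,2} + g {1,3} + g {2,3} + g {1,2,3}"
  using dd unfolding powlem by (simp add: ac_simps)
lemma allsub: "(\<forall>S\<subseteq>{1..3::nat}. P S) \<longleftrightarrow> (\<forall>S\<in>Pow {1..3}. P S)" by auto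
lemma filt: "(\<Sum>S\<in>{S\<in>Pow {1..3::nat}. P S}. g S) = (\<Sum>S\<in>Pow {1..3}. if P S then g S else 0)" for P and g :: "nat set \<Rightarrow> real"
    by (rule sum.inter_filter) simp

lemma feas_iff: "lp_feasible 3 x \<theta> \<longleftrightarrow>
  \<theta> {} \<ge> 0 \<and> \<theta> {1} \<ge> 0 \<and> \<theta> {2} \<ge> 0 \<and> \<theta> {3} \<ge> 0 \<and> \<theta> {1,2} \<ge> 0 \<and> \<theta> {1,3} \<ge> 0 \<and> \<theta> {2,3} \<ge> 0 \<and> \<theta> {1,2,3} \<ge> 0
  \<and> \<theta> {} + \<theta> {1} + \<theta> {2} + \<theta> {3} + \<theta> {1,2} + \<theta> {1,3} + \<theta> {2,3} + \<theta> {1,2,3} = 1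
  \<and> \<theta> {1} + \<theta> {1,2} + \<theta> {1,3} + \<theta> {1,2,3} = x 1
  \<and> \<theta> {2} + \<theta> {1,2} + \<theta> {2,3} + \<theta> {1,2,3} = x 2
  \<and> \<theta> {3} + \<theta> {1,3} + \<theta> {2,3} + \<theta> {1,2,3} = x 3
  \<and> \<theta> {1,2} + \<theta> {1,2,3} = x 1 * x 2
  \<and> \<theta> {1,3} + \<theta> {1,2,3} = x 1 * x 3
  \<and> \<theta> {2,3} + \<theta> {1,2,3} = x 2 * x 3"
proof -
  have b: "(\<forall>i\<in>{1..3::nat}. P i) \<longleftrightarrow> P 1 \<and> P 2 \<and> P 3" for P unfolding ivl3 by auto
  have c: "(\<forall>i\<in>{1..3::nat}. \<forall>j\<in>{1..3::nat}. i < j \<longrightarrow> Q i j) \<longleftrightarrow> Q 1 2 \<and> Q 1 3 \<and> Q 2 3" for Q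
    unfolding ivl3 by auto
  show ?thesis unfolding lp_feasible_def allsub b c filt sumPow unfolding powlem
    by (simp add: ac_simps)
qed

lemma cyl_iff:
  fixes \<theta> :: "nat set \<Rightarrow> real" and x :: "nat \<Rightarrow> real"
  shows "(\<forall>T\<subseteq>{1..3::nat}. T \<noteq> {} \<longrightarrow> R (\<Sum>S\<in>{S\<in>Pow {1..3}. T \<subseteq> S}. \<theta> S) (\<Prod>i\<in>T. x i)) \<longleftrightarrow>
   R (\<theta> {1} + \<theta> {1,2} + \<theta> {1,3} + \<theta> {1,2,3}) (x 1) \<and>
   R (\<theta> {2} + \<theta> {1,2} + \<theta> {2,3} + \<theta> {1,2,3}) (x 2) \<and>
   R (\<theta> {3} + \<theta> {1,3} + \<theta> {2,3} + \<theta> {1,2,3}) (x 3) \<and>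
   R (\<theta> {1,2} + \<theta> {1,2,3}) (x 1 * x 2) \<and>
   R (\<theta> {1,3} + \<theta> {1,2,3}) (x 1 * x 3) \<and>
   R (\<theta> {2,3} + \<theta> {1,2,3}) (x 2 * x 3) \<and>
   R (\<theta> {1,2,3}) (x 1 * x 2 * x 3)"
proof -
  have g: "(\<forall>T\<subseteq>{1..3::nat}. T \<noteq> {} \<longrightarrow> Q T) \<longleftrightarrow> Q {1} \<and> Q {2} \<and> Q {3} \<and> Q {1,2} \<and> Q {1,3} \<and> Q {2,3} \<and> Q {1,2,3}" for Q
    unfolding allsub powlem by auto
  show ?thesis unfolding g unfolding filt sumPow using dd
  by (simp add: ac_simps)
qed


lemma feas_expr:
  assumes "lp_feasible 3 x \<theta>"
  shows "\<theta> {1,2} = x 1 * x 2 - \<theta> {1,2,3}" "\<theta> {1,3} = x 1 * x 3 - \<theta> {1,2,3}"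
    "\<theta> {2,3} = x 2 * x 3 - \<theta> {1,2,3}"
    "\<theta> {1} = x 1 - x 1 * x 2 - x 1 * x 3 + \<theta> {1,2,3}"
    "\<theta> {2} = x 2 - x 1 * x 2 - x 2 * x 3 + \<theta> {1,2,3}"
    "\<theta> {3} = x 3 - x 1 * x 3 - x 2 * x 3 + \<theta> {1,2,3}"
    "\<theta> {} = 1 - x 1 - x 2 - x 3 + x 1 * x 2 + x 1 * x 3 + x 2 * x 3 - \<theta> {1,2,3}"
  using assms unfolding feas_iff by linarith+

lemma val_diff:
  assumes "lp_feasible 3 x \<theta>" "lp_feasible 3 x \<theta>'"
  shows "lp_value 3 f \<theta>' - lp_value 3 f \<theta> = (\<theta>' {1,2,3} - \<theta> {1,2,3}) *
     (f {1,2,3} - f {1,2} - f {1,3} - f {2,3} + f {1} + f {2} + f {3} - f {})"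
  unfolding lp_value_def sumPow feas_expr[OF assms(1)] feas_expr[OF assms(2)]
  by (simp add: algebra_simps)

definition th :: "(nat \<Rightarrow> real) \<Rightarrow> real \<Rightarrow> nat set \<Rightarrow> real" where
  "th x t = (\<lambda>S. if S = {1,2,3} then t
     else if S = {1,2} then x 1 * x 2 - t
     else if S = {1,3} then x 1 * x 3 - t
     else if S = {2,3} then x 2 * x 3 - t
     else if S = {1} then x 1 - x 1 * x 2 - x 1 * x 3 + t
     else if S = {2} then x 2 - x 1 * x 2 - x 2 * x 3 + t
     else if S = {3} then x 3 - x 1 * x 3 - x 2 * x 3 + t
     else 1 - x 1 - x 2 - x 3 + x 1 * x 2 + x 1 * x 3 + x 2 * x 3 - t)"

lemma th_vals: "th x t {1,2,3} = t" "th x t {1,2} = x 1 * x 2 - t" "th x t {1,3} = x 1 * x 3 - t"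
  "th x t {2,3} = x 2 * x 3 - t" "th x t {1} = x 1 - x 1 * x 2 - x 1 * x 3 + t"
  "th x t {2} = x 2 - x 1 * x 2 - x 2 * x 3 + t" "th x t {3} = x 3 - x 1 * x 3 - x 2 * x 3 + t"
  "th x t {} = 1 - x 1 - x 2 - x 3 + x 1 * x 2 + x 1 * x 3 + x 2 * x 3 - t"
  unfolding th_def using dd by (simp_all add: eq_commute[of "{1,2,3}"] eq_commute[of "{1,2}"]
     eq_commute[of "{1,3}"] eq_commute[of "{2,3}"])

lemma th_feas:
  assumes "0 \<le> t" "x 1 * x 2 + x 1 * x 3 - x 1 \<le> t" "x 1 * x 2 + x 2 * x 3 - x 2 \<le> t"
    "x 1 * x 3 + x 2 * x 3 - x 3 \<le> t" "t \<le> x 1 * x 2" "t \<le> x 1 * x 3" "t \<le> x 2 * x 3"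
    "t \<le> 1 - x 1 - x 2 - x 3 + x 1 * x 2 + x 1 * x 3 + x 2 * x 3"
  shows "lp_feasible 3 x (th x t)"
  unfolding feas_iff th_vals using assms by auto

lemma prod_facts:
  fixes a b c :: real
  assumes "0 \<le> a" "a \<le> 1" "0 \<le> b" "b \<le> 1" "0 \<le> c" "c \<le> 1"
  shows "0 \<le> a * b * c" "a * b + a * c - a \<le> a * b * c" "a * b * c \<le> a * b"
    "a * b * c \<le> 1 - a - b - c + a * b + a * c + b * c"
proof -
  show "0 \<le> a * b * c" using assms by simp
  have "0 \<le> a * (1 - b) * (1 - c)" using assms by simp
  then show "a * b + a * c - a \<le> a * b * c" by (simp add: algebra_simps)
  have "0 \<le> a * b * (1 - c)" using assms by simp
  then show "a * b * c \<le> a * b" by (simp add: algebra_simps)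
  have "0 \<le> (1 - a) * (1 - b) * (1 - c)" using assms by simp
  then show "a * b * c \<le> 1 - a - b - c + a * b + a * c + b * c" by (simp add: algebra_simps)
qed

theorem mainTheorem8:
  fixes f :: "nat set \<Rightarrow> real" and x :: "nat \<Rightarrow> real"
  assumes "in_F 3 f"
    and "\<forall>i\<in>{1..3}. 0 \<le> x i \<and> x i \<le> 1"
  shows "(f {1,2} + f {1,3} + f {2,3} \<ge> 1 + f {1} + f {2} + f {3} \<longrightarrow>
            (\<exists>\<theta>. lp_optimal 3 f x \<theta> \<and> \<theta> {1,2,3} \<le> x 1 * x 2 * x 3
                 \<and> neg_cylinder_dep 3 x \<theta>))
       \<and> (\<not> (f {1,2} + f {1,3} + f {2,3} \<ge> 1 + f {1} + f {2} + f {3}) \<longrightarrow>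
            (\<exists>\<theta>. lp_optimal 3 f x \<theta> \<and> \<theta> {1,2,3} \<ge> x 1 * x 2 * x 3
                 \<and> pos_cylinder_dep 3 x \<theta>))"
proof -
  have f0: "f {} = 0" and f1: "f {1,2,3} = 1" using assms(1) unfolding in_F_def ivl3 by auto
  have x: "0 \<le> x 1" "x 1 \<le> 1" "0 \<le> x 2" "x 2 \<le> 1" "0 \<le> x 3" "x 3 \<le> 1"
    using assms(2) by auto
  note P1 = prod_facts[OF x]
  note P2 = prod_facts[OF x(3,4,5,6,1,2)]
  note P3 = prod_facts[OF x(5,6,1,2,3,4)]
  define p where "p = x 1 * x 2 * x 3"
  define lo where "lo = max 0 (max (x 1 * x 2 + x 1 * x 3 - x 1) (max (x 1 * x 2 + x 2 * x 3 - x 2) (x 1 * x 3 + x 2 * x 3 - x 3)))"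
  define hi where "hi = min (x 1 * x 2) (min (x 1 * x 3) (min (x 2 * x 3) (1 - x 1 - x 2 - x 3 + x 1 * x 2 + x 1 * x 3 + x 2 * x 3)))"
  have lop: "lo \<le> p" using P1 P2 P3 unfolding lo_def p_def by (simp add: algebra_simps)
  have php: "p \<le> hi" using P1 P2 P3 unfolding hi_def p_def by (simp add: algebra_simps)
  have feas: "lp_feasible 3 x (th x t)" if "lo \<le> t" "t \<le> hi" for t
    apply (rule th_feas) using that lop php unfolding lo_def hi_def by auto
  have lower: "lo \<le> \<theta> {1,2,3}" if "lp_feasible 3 x \<theta>" for \<theta>
    using that unfolding lo_def feas_iff by auto
  have upper: "\<theta> {1,2,3} \<le> hi" if "lp_feasible 3 x \<theta>" for \<theta>
    using that unfolding hi_def feas_iff by auto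
  define D where "D = f {1,2,3} - f {1,2} - f {1,3} - f {2,3} + f {1} + f {2} + f {3} - f {}"
  have cylth: "(\<theta>::nat set \<Rightarrow> real) {1} + \<theta> {1,2} + \<theta> {1,3} + \<theta> {1,2,3} = x 1 \<and>
   \<theta> {2} + \<theta> {1,2} + \<theta> {2,3} + \<theta> {1,2,3} = x 2 \<and>
   \<theta> {3} + \<theta> {1,3} + \<theta> {2,3} + \<theta> {1,2,3} = x 3 \<and>
   \<theta> {1,2} + \<theta> {1,2,3} = x 1 * x 2 \<and>
   \<theta> {1,3} + \<theta> {1,2,3} = x 1 * x 3 \<and>
   \<theta> {2,3} + \<theta> {1,2,3} = x 2 * x 3" if "lp_feasible 3 x \<theta>" for \<theta>
    using that unfolding feas_iff by auto
  show ?thesis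
  proof (intro conjI impI)
    assume A: "f {1,2} + f {1,3} + f {2,3} \<ge> 1 + f {1} + f {2} + f {3}"
    have Dn: "D \<le> 0" using A f0 f1 unfolding D_def by simp
    have F: "lp_feasible 3 x (th x lo)" using feas lop php by simp
    have opt: "lp_optimal 3 f x (th x lo)"
      unfolding lp_optimal_def
    proof (intro conjI allI impI F)
      fix \<theta>' assume T: "lp_feasible 3 x \<theta>'"
      have "lp_value 3 f \<theta>' - lp_value 3 f (th x lo) = (\<theta>' {1,2,3} - lo) * D"
        using val_diff[OF F T, of f] unfolding th_vals D_def .
      moreover have "(\<theta>' {1,2,3} - lo) * D \<le> 0"
        using lower[OF T] Dn by (simp add: mult_nonneg_nonpos)
      ultimately show "lp_value 3 f \<theta>' \<le> lp_value 3 f (th x lo)" by simp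
    qed
    have "th x lo {1,2,3} \<le> x 1 * x 2 * x 3" using lop unfolding th_vals p_def .
    moreover have "neg_cylinder_dep 3 x (th x lo)"
      unfolding neg_cylinder_dep_def cyl_iff using cylth[OF F] lop unfolding th_vals p_def by auto
    ultimately show "\<exists>\<theta>. lp_optimal 3 f x \<theta> \<and> \<theta> {1,2,3} \<le> x 1 * x 2 * x 3 \<and> neg_cylinder_dep 3 x \<theta>"
      using opt by blast
  next
    assume A: "\<not> (f {1,2} + f {1,3} + f {2,3} \<ge> 1 + f {1} + f {2} + f {3})"
    have Dp: "D \<ge> 0" using A f0 f1 unfolding D_def by simp
    have F: "lp_feasible 3 x (th x hi)" using feas lop php by simp
    have opt: "lp_optimal 3 f x (th x hi)"
      unfolding lp_optimal_def
    proof (intro conjI allI impI F)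
      fix \<theta>' assume T: "lp_feasible 3 x \<theta>'"
      have "lp_value 3 f \<theta>' - lp_value 3 f (th x hi) = (\<theta>' {1,2,3} - hi) * D"
        using val_diff[OF F T, of f] unfolding th_vals D_def .
      moreover have "(\<theta>' {1,2,3} - hi) * D \<le> 0"
        using upper[OF T] Dp by (simp add: mult_nonpos_nonneg)
      ultimately show "lp_value 3 f \<theta>' \<le> lp_value 3 f (th x hi)" by simp
    qed
    have "th x hi {1,2,3} \<ge> x 1 * x 2 * x 3" using php unfolding th_vals p_def .
    moreover have "pos_cylinder_dep 3 x (th x hi)"
      apply (simp only: pos_cylinder_dep_def cyl_iff[where R="\<lambda>a b. b \<le> a"])
      using cylth[OF F] php unfolding th_vals p_def by auto
    ultimately show "\<exists>\<theta>. lp_optimal 3 f x \<theta> \<and> \<theta> {1,2,3} \<ge> x 1 * x 2 * x 3 \<and> pos_cylinder_dep 3 x \<theta>"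
      using opt by blast
  qed
qed

end
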